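(* Let $K\ge 2$ and $p\in(0,1)$. For every $f\in\mathcal M_p$ with $\sigma_f$ equal to the identity, $$\sum_{r=1}^{K-1}D(f,r)\;\le\;C(K,p):=\sum_{r=1}^{K-2}\frac{(1-p)p^{K-r}}{(K-r)p^{K-r+1}-(K-r+1)p^{K-r}+1}+\frac{1+p}{1-p},$$ with equality when $f=f^{\mathrm{OA}}_{\mathrm{id}}$. Consequently $\min_{f}I^{\mathrm N}(f)=I^{\mathrm N}(f^{\mathrm{OA}}_{\mathrm{id}})=\log(1/p)/C(K,p)$ (minimum over $f\in\mathcal M_p$ with identity ranking), and moreover $$\frac{\log(1/p)}{C(K,p)}=(1-p)\log\!\Big(\frac1p\Big)\Big(1+\sum_{j=2}^{K}\frac{p^{j-1}}{1+2p+\cdots+(j-1)p^{j-2}}\Big)^{-1}.$$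
   Context: Items are $[K]=\{1,\dots,K\}$, $\mathcal S=\{S\subseteq[K]:|S|\ge2\}$, and $[n]=\{1,\dots,n\}$. A preference $f$ is a family of numbers $f(i\mid S)$, $S\in\mathcal S$, $i\in[K]$. For $p\in(0,1)$, the $p$-Separable family $\mathcal M_p$ consists of all $f$ such that (i) $f(i\mid S)>0$ iff $i\in S$; (ii) $\sum_{i\in S}f(i\mid S)=1$; (iii) there is a bijection $\sigma_f:[K]\to[K]$ (the ranking) such that for all $S\in\mathcal S$ and $i,i'\in S$ with $\sigma_f(i')<\sigma_f(i)$, $f(i\mid S)\le p\,f(i'\mid S)$. When $\sigma_f$ is the identity this says $f(i\mid S)\le p f(i'\mid S)$ whenever $i'<i$ in $S$. Hardness quantity (for $\sigma_f$ the identity): for $r\in[K-1]$, $i\in[r-1]$ let $\Delta^i_{K-r+1}=f(K-r+1\mid[K-i+1])-f(K-r+2\mid[K-i+1])$; $D(f,1)=\frac{1}{1-Kf(K\mid[K])}$ and for $r\in\{2,\dots,K-1\}$, $D(f,r)=\frac{(K-r+1)\sum_{i=1}^{r-1}\Delta^i_{K-r+1}D(f,i)}{1-(K-r+1)f(K-r+1\mid[K-r+1])}$; $I^{\mathrm N}(f)=\log(1/p)\big[\sum_{r=1}^{K-1}D(f,r)\big]^{-1}$. Ordinal Attraction (OA) preference: for a bijection $\sigma:[K]\to[K]$ and $S\in\mathcal S$, $i\in S$, let $\sigma(i\mid S)=1+|\{j\in S:\sigma(j)<\sigma(i)\}|$ be the local rank of $i$ in $S$, and $f^{\mathrm{OA}}_\sigma(i\mid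 S)=\frac{1-p}{1-p^{|S|}}p^{\sigma(i\mid S)-1}$ for $i\in S$ (and $0$ for $i\notin S$). $f^{\mathrm{OA}}_{\mathrm{id}}$ denotes the OA preference for the identity ranking. *)

theory Defs
  imports Complex_Main
begin

text \<open>Items are 1..K; a preference is f :: nat => nat set => real, f i S = f(i | S).\<close>

definition choice_sets :: "nat \<Rightarrow> nat set set" where
  "choice_sets K = {S. S \<subseteq> {1..K} \<and> 2 \<le> card S}"

definition separable_wrt :: "real \<Rightarrow> nat \<Rightarrow> (nat \<Rightarrow> nat set \<Rightarrow> real) \<Rightarrow> (nat \<Rightarrow> nat) \<Rightarrow> bool" where
  "separable_wrt p K f \<sigma> \<longleftrightarrow>
     (\<forall>S\<in>choice_sets K. \<forall>i\<in>S. \<forall>i'\<in>S. \<sigma> i' < \<sigma> i \<longrightarrow> f i S \<le> p * f i' S)"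

definition in_Mp :: "real \<Rightarrow> nat \<Rightarrow> (nat \<Rightarrow> nat set \<Rightarrow> real) \<Rightarrow> bool" where
  "in_Mp p K f \<longleftrightarrow>
     (\<forall>S\<in>choice_sets K. \<forall>i\<in>{1..K}. (0 < f i S \<longleftrightarrow> i \<in> S)) \<and>
     (\<forall>S\<in>choice_sets K. (\<Sum>i\<in>S. f i S) = 1) \<and>
     (\<exists>\<sigma>. bij_betw \<sigma> {1..K} {1..K} \<and> separable_wrt p K f \<sigma>)"

text \<open>Delta^i_{K-r+1} = f(K-r+1 | [K-i+1]) - f(K-r+2 | [K-i+1]).\<close>
definition Delta :: "nat \<Rightarrow> (nat \<Rightarrow> nat set \<Rightarrow> real) \<Rightarrow> nat \<Rightarrow> nat \<Rightarrow> real" where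
  "Delta K f i r = f (K - r + 1) {1..K - i + 1} - f (K - r + 2) {1..K - i + 1}"

function D :: "nat \<Rightarrow> (nat \<Rightarrow> nat set \<Rightarrow> real) \<Rightarrow> nat \<Rightarrow> real" where
  "D K f r =
     (if r \<le> 1 then 1 / (1 - real K * f K {1..K})
      else (real (K - r + 1) * (\<Sum>i\<in>{1..r-1}. Delta K f i r * D K f i))
           / (1 - real (K - r + 1) * f (K - r + 1) {1..K - r + 1}))"
  by pat_completeness auto
termination by (relation "measure (\<lambda>(K, f, r). r)") auto

declare D.simps [simp del]

definition I_N :: "real \<Rightarrow> nat \<Rightarrow> (nat \<Rightarrow> nat set \<Rightarrow> real) \<Rightarrow> real" where
  "I_N p K f = ln (1 / p) / (\<Sum>r\<in>{1..K-1}. D K f r)"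

definition local_rank :: "(nat \<Rightarrow> nat) \<Rightarrow> nat \<Rightarrow> nat set \<Rightarrow> nat" where
  "local_rank \<sigma> i S = 1 + card {j\<in>S. \<sigma> j < \<sigma> i}"

definition f_OA :: "real \<Rightarrow> (nat \<Rightarrow> nat) \<Rightarrow> nat \<Rightarrow> nat set \<Rightarrow> real" where
  "f_OA p \<sigma> i S =
     (if i \<in> S then (1 - p) / (1 - p ^ card S) * p ^ (local_rank \<sigma> i S - 1) else 0)"

definition C_const :: "nat \<Rightarrow> real \<Rightarrow> real" where
  "C_const K p =
     (\<Sum>r\<in>{1..K-2}. (1 - p) * p ^ (K - r) /
        (real (K - r) * p ^ (K - r + 1) - real (K - r + 1) * p ^ (K - r) + 1))
     + (1 + p) / (1 - p)"

end

theory Submission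
  imports Defs
begin

definition WW :: "real \<Rightarrow> nat \<Rightarrow> real" where "WW p l = (\<Sum>j<l. p^j)"
definition QQ :: "real \<Rightarrow> nat \<Rightarrow> real" where "QQ p n = (\<Sum>m\<in>{1..n}. real m * p^(m-1))"
definition cc :: "real \<Rightarrow> nat \<Rightarrow> real" where
  "cc p l = (1 + (\<Sum>j\<in>{2..l}. p^(j-1) / QQ p (j-1))) / (1-p)"
definition BB :: "real \<Rightarrow> nat \<Rightarrow> real" where "BB p l = real l * cc p l"

lemma WW_Suc: "WW p (Suc l) = WW p l + p^l" by (simp add: WW_def)
lemma QQ_Suc: "QQ p (Suc n) = QQ p n + real (Suc n) * p^n" by (simp add: QQ_def)
lemma WQ: "WW p l - real l * p^l = (1-p) * QQ p l"
proof (induction l)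
  case 0 then show ?case by (simp add: WW_def QQ_def)
next
  case (Suc l) then show ?case by (simp add: WW_Suc QQ_Suc algebra_simps)
qed

lemma QQ_pos: assumes "0 < p" "1 \<le> n" shows "0 < QQ p n"
  unfolding QQ_def
  by (rule sum_pos2[where i=1]) (use assms in auto)

lemma cc_Suc: assumes "p < 1" "1 \<le> l"
  shows "cc p (Suc l) = cc p l + p^l / ((1-p) * QQ p l)"
proof -
  have "{2..Suc l} = insert (Suc l) {2..l}" using assms by (auto)
  hence "(\<Sum>j\<in>{2..Suc l}. p^(j-1) / QQ p (j-1)) = p^l / QQ p l + (\<Sum>j\<in>{2..l}. p^(j-1) / QQ p (j-1))"
    by simp
  thus ?thesis unfolding cc_def by (simp add: add_divide_distrib divide_divide_eq_left algebra_simps)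
qed

lemma cc_2: "p < 1 \<Longrightarrow> cc p 2 = (1+p)/(1-p)"
  by (simp add: cc_def QQ_def)

lemma cc_mono: assumes "0 < p" "p < 1" "1 \<le> l" shows "cc p l \<le> cc p (Suc l)"
  using cc_Suc[OF assms(2,3)] QQ_pos[OF assms(1,3)] assms by simp

lemma cc_ge1: assumes "0 < p" "p < 1" shows "1 \<le> cc p l"
proof -
  have "0 \<le> (\<Sum>j\<in>{2..l}. p^(j-1) / QQ p (j-1))"
    by (rule sum_nonneg) (use assms QQ_pos in \<open>auto intro!: divide_nonneg_pos\<close>)
  then show ?thesis using assms unfolding cc_def by (simp add: field_simps)
qed

lemma Y: assumes "0 < p" "p < 1" "2 \<le> l"
  shows "WW p l + (1-p) * (\<Sum>k\<in>{2..<l}. BB p k * p^(k-1)) + BB p l * p^(l-1) = cc p l * WW p l"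
  using assms(3)
proof (induction l rule: nat_induct_at_least)
  case base
  have w2: "WW p 2 = 1 + p" by (simp add: WW_def numeral_2_eq_2)
  have p2: "p^(2-1) = p" by simp
  show ?case using assms unfolding p2 by (simp add: BB_def cc_2 w2 field_simps)
next
  case (Suc l)
  define s where "s = (\<Sum>k\<in>{2..<l}. BB p k * p^(k-1))"
  have ss: "(\<Sum>k\<in>{2..<Suc l}. BB p k * p^(k-1)) = s + BB p l * p^(l-1)"
    using Suc.hyps by (simp add: s_def atLeastLessThanSuc)
  have d: "(cc p (Suc l) - cc p l) * (WW p l - real l * p^l) = p^l"
    using cc_Suc[OF assms(2), of l] Suc.hyps QQ_pos[OF assms(1), of l] assms by (simp add: WQ)
  have pl: "p^l = p * p^(l-1)" using Suc.hyps by (cases l) auto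
  have IH: "WW p l + (1-p) * s + real l * cc p l * p^(l-1) = cc p l * WW p l"
    using Suc.IH by (simp add: s_def BB_def)
  define q where "q = p^(l-1)"
  have pl': "p^l = p * q" using pl q_def by simp
  have e: "WW p l + p * q + (1-p) * (s + real l * cc p l * q) + real (Suc l) * cc p (Suc l) * (p*q)
      = cc p (Suc l) * (WW p l + p * q)"
    using IH d unfolding pl' q_def[symmetric] by (simp add: algebra_simps)
  have "WW p (Suc l) + (1-p) * (s + BB p l * p^(l-1)) + BB p (Suc l) * p^(Suc l - 1) = cc p (Suc l) * WW p (Suc l)"
    using e pl' unfolding BB_def WW_Suc q_def[symmetric] by simp
  then show ?case using ss by simp
qed

lemma chain:
  fixes p :: real and g :: "nat \<Rightarrow> real"
  assumes "0 \<le> p" "\<forall>j\<in>{1..<n}. g (Suc j) \<le> p * g j"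
  shows "j \<in> {1..n} \<Longrightarrow> g n \<le> p^(n-j) * g j"
proof (induction "n - j" arbitrary: j)
  case 0 then show ?case by auto
next
  case (Suc k)
  then have j: "1 \<le> j" "j < n" "Suc j \<in> {1..n}" by auto
  have "g n \<le> p^(n - Suc j) * g (Suc j)" using Suc by (intro Suc.hyps) auto
  also have "\<dots> \<le> p^(n - Suc j) * (p * g j)"
    using assms j by (intro mult_left_mono) auto
  also have "\<dots> = p^(n-j) * g j" using j
    by (metis Suc_diff_Suc mult.assoc power_Suc2)
  finally show ?case .
qed

lemma sum_pw: "(\<Sum>j\<in>{1..n}. p^(j-1)) = WW p n"
  by (induction n) (auto simp: WW_Suc WW_def atLeastAtMostSuc_conv)

lemma Qlem:
  assumes p: "0 < p" "p < 1" and m: "2 \<le> m"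
  shows "(\<forall>j\<in>{1..m}. 0 \<le> g j) \<Longrightarrow> (\<forall>j\<in>{1..<m}. g (Suc j) \<le> p * g j) \<Longrightarrow>
    (\<Sum>j\<in>{1..m}. g j) + (\<Sum>k\<in>{2..<m}. BB p k * (g k - g (Suc k))) + BB p m * g m
     \<le> cc p m * (\<Sum>j\<in>{1..m}. g j)"
  using m
proof (induction m arbitrary: g rule: nat_induct_at_least)
  case base
  have s1: "(\<Sum>j\<in>{1..2}. g j) = g 1 + g 2" by (simp add: numeral_2_eq_2)
  have r: "g 2 \<le> p * g 1" using base.prems(2) by (auto simp: numeral_2_eq_2)
  have c: "cc p 2 * (1 - p) = 1 + p" using p by (simp add: cc_2)
  have "g 1 + g 2 + 2 * cc p 2 * g 2 \<le> cc p 2 * (g 1 + g 2)"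
  proof -
    have "(g 1 + g 2 + 2 * cc p 2 * g 2) * (1-p) \<le> cc p 2 * (g 1 + g 2) * (1-p)"
    proof -
      have e1: "(g 1 + g 2 + 2 * cc p 2 * g 2) * (1-p) = (g 1 + g 2)*(1-p) + 2*g 2*(cc p 2 * (1-p))"
        by (simp add: algebra_simps)
      have e2: "cc p 2 * (g 1 + g 2) * (1-p) = (cc p 2 * (1-p))*(g 1 + g 2)"
        by (simp add: algebra_simps)
      show ?thesis unfolding e1 e2 c using r by (simp add: algebra_simps)
    qed
    then show ?thesis using p by simp
  qed
  then show ?case unfolding s1 by (simp add: BB_def)
next
  case (Suc m)
  define lam where "lam = g (Suc m) / p^m"
  define h where "h = (\<lambda>j. g j - lam * p^(j-1))"
  have pm: "0 < p^m" using p by simp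
  have gj: "lam * p^(j-1) \<le> g j" if "j \<in> {1..Suc m}" for j
  proof -
    have "g (Suc m) \<le> p^(Suc m - j) * g j" using chain[of p "Suc m" g j] p Suc.prems that by auto
    moreover have "p^m = p^(Suc m - j) * p^(j-1)" using that by (simp add: power_add[symmetric])
    ultimately show ?thesis unfolding lam_def using pm p
      by (simp add: divide_le_eq) (metis mult.commute mult_le_cancel_left_pos mult.assoc zero_less_power)
  qed
  have h0: "\<forall>j\<in>{1..m}. 0 \<le> h j" using gj by (auto simp: h_def)
  have hm: "h (Suc m) = 0" using pm p by (simp add: h_def lam_def)
  have hr: "\<forall>j\<in>{1..<m}. h (Suc j) \<le> p * h j"
  proof
    fix j assume j: "j \<in> {1..<m}"
    have "p^j = p * p^(j-1)" using j by (cases j) auto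
    then show "h (Suc j) \<le> p * h j" using Suc.prems(2) j by (auto simp: h_def algebra_simps)
  qed
  note IH = Suc.IH[OF h0 hr]
  define Sh where "Sh = (\<Sum>j\<in>{1..m}. h j)"
  have Sh0: "0 \<le> Sh" unfolding Sh_def using h0 by (intro sum_nonneg) auto
  have S: "(\<Sum>j\<in>{1..Suc m}. g j) = Sh + lam * WW p (Suc m)"
  proof -
    have "(\<Sum>j\<in>{1..Suc m}. g j) = (\<Sum>j\<in>{1..Suc m}. h j + lam * p^(j-1))"
      by (simp add: h_def)
    also have "\<dots> = (\<Sum>j\<in>{1..Suc m}. h j) + lam * (\<Sum>j\<in>{1..Suc m}. p^(j-1))"
      by (simp only: sum.distrib sum_distrib_left)
    also have "(\<Sum>j\<in>{1..Suc m}. h j) = Sh" using hm by (simp add: Sh_def atLeastAtMostSuc_conv)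
    finally show ?thesis by (simp only: sum_pw)
  qed
  have T: "(\<Sum>k\<in>{2..<Suc m}. BB p k * (g k - g (Suc k))) =
      (\<Sum>k\<in>{2..<m}. BB p k * (h k - h (Suc k))) + BB p m * h m
      + lam * ((1-p) * (\<Sum>k\<in>{2..<Suc m}. BB p k * p^(k-1)))"
  proof -
    have "(\<Sum>k\<in>{2..<Suc m}. BB p k * (g k - g (Suc k))) =
       (\<Sum>k\<in>{2..<Suc m}. BB p k * (h k - h (Suc k)) + lam * ((1-p) * (BB p k * p^(k-1))))"
    proof (rule sum.cong)
      fix k assume k: "k \<in> {2..<Suc m}"
      have "p^k = p * p^(k-1)" using k by (cases k) auto
      then show "BB p k * (g k - g (Suc k)) = BB p k * (h k - h (Suc k)) + lam * ((1-p) * (BB p k * p^(k-1)))"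
        by (simp add: h_def algebra_simps)
    qed simp
    also have "\<dots> = (\<Sum>k\<in>{2..<Suc m}. BB p k * (h k - h (Suc k))) + lam * ((1-p) * (\<Sum>k\<in>{2..<Suc m}. BB p k * p^(k-1)))"
      by (simp only: sum.distrib sum_distrib_left)
    also have "(\<Sum>k\<in>{2..<Suc m}. BB p k * (h k - h (Suc k))) = (\<Sum>k\<in>{2..<m}. BB p k * (h k - h (Suc k))) + BB p m * h m"
      using Suc.hyps hm by (simp add: atLeastLessThanSuc)
    finally show ?thesis .
  qed
  have B: "BB p (Suc m) * g (Suc m) = lam * (BB p (Suc m) * p^m)"
    using pm p by (simp add: lam_def)
  have m2: "2 \<le> Suc m" using Suc.hyps by simp
  note Yi = Y[OF p(1) p(2) m2]
  have cm: "cc p m \<le> cc p (Suc m)" using cc_mono[OF p, of m] Suc.hyps by simp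
  have IH': "Sh + ((\<Sum>k\<in>{2..<m}. BB p k * (h k - h (Suc k))) + BB p m * h m) \<le> cc p m * Sh"
    using IH by (simp add: Sh_def)
  have "cc p m * Sh \<le> cc p (Suc m) * Sh" using cm Sh0 by (rule mult_right_mono)
  moreover have L: "lam * WW p (Suc m) + lam * ((1-p) * (\<Sum>k\<in>{2..<Suc m}. BB p k * p^(k-1))) + lam * (BB p (Suc m) * p^m)
      = cc p (Suc m) * (lam * WW p (Suc m))"
    using arg_cong[OF Yi, of "\<lambda>x. lam*x"] by (simp add: algebra_simps)
  moreover have "cc p (Suc m) * (Sh + lam * WW p (Suc m)) = cc p (Suc m) * Sh + cc p (Suc m) * (lam * WW p (Suc m))"
    by (simp add: distrib_left)
  ultimately show ?case unfolding S T B using IH' by linarith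
qed

function bb :: "(nat \<Rightarrow> nat \<Rightarrow> real) \<Rightarrow> nat \<Rightarrow> real" where
  "bb g m = real m * (1 + (\<Sum>k\<in>{2..<m}. bb g k * (g m k - g m (Suc k)))) / (1 - real m * g m m)"
  by pat_completeness auto
termination by (relation "measure (\<lambda>(g, m). m)") auto

declare bb.simps[simp del]

lemma D_bb:
  assumes K: "2 \<le> K"
  shows "(\<Sum>r\<in>{1..K-1}. D K f r) = bb (\<lambda>m j. f j {1..m}) K / real K"
proof -
  define g where "g = (\<lambda>m j. f j {1..m})"
  define E where "E = (\<lambda>n. D K f (K - n + 1))"
  define a where "a = (\<lambda>n. real n / (1 - real n * g n n))"
  define c where "c = (\<lambda>m n. g m n - g m (Suc n))"
  define u where "u = (\<lambda>k. 1 + (\<Sum>j\<in>{2..<k}. bb g j * c k j))"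
  have bbau: "bb g k = a k * u k" for k
    by (subst bb.simps) (simp add: a_def u_def c_def)
  have S1: "(\<Sum>r\<in>{1..K-1}. D K f r) = (\<Sum>n\<in>{2..K}. E n)"
    by (rule sum.reindex_bij_witness[where i="\<lambda>n. K - n + 1" and j="\<lambda>r. K - r + 1"])
       (use K in \<open>auto simp: E_def\<close>)
  have EK: "E K = 1 / (1 - real K * g K K)"
    by (simp add: E_def g_def D.simps)
  have En: "E n = a n * (\<Sum>m\<in>{n<..K}. c m n * E m)" if n: "n \<in> {2..<K}" for n
  proof -
    have r: "\<not> K - n + 1 \<le> 1" "K - (K - n + 1) + 1 = n" using n by auto
    have s: "(\<Sum>i\<in>{1..K - n + 1 - 1}. Delta K f i (K - n + 1) * D K f i) = (\<Sum>m\<in>{n<..K}. c m n * E m)"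
    proof (rule sum.reindex_bij_witness[where i="\<lambda>m. K - m + 1" and j="\<lambda>i. K - i + 1"])
      fix i assume i: "i \<in> {1..K - n + 1 - 1}"
      show "c (K - i + 1) n * E (K - i + 1) = Delta K f i (K - n + 1) * D K f i"
      proof -
        have e1: "K - (K - i + 1) + 1 = i" "K - (K - n + 1) + 1 = n" "K - (K - n + 1) + 2 = Suc n"
          "Suc (K - Suc (K - i)) = i"
          using i n by auto
        show ?thesis unfolding Delta_def c_def g_def E_def e1 by (simp add: e1)
      qed
    qed (use n in auto)
    show ?thesis unfolding E_def apply (subst D.simps)
      using r s unfolding E_def by (simp add: a_def g_def)
  qed
  have sw: "(\<Sum>n\<in>{2..K}. \<Sum>k\<in>{2..<n}. E n * (bb g k * c n k))
      = (\<Sum>k\<in>{2..<K}. \<Sum>n\<in>{k<..K}. E n * (bb g k * c n k))"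
  proof -
    have "(\<Sum>n\<in>{2..K}. \<Sum>k\<in>{2..<n}. E n * (bb g k * c n k))
        = (\<Sum>n\<in>{2..K}. \<Sum>k\<in>{k\<in>{2..<K}. k < n}. E n * (bb g k * c n k))"
      by (rule sum.cong) (auto intro!: sum.cong)
    also have "\<dots> = (\<Sum>k\<in>{2..<K}. \<Sum>n\<in>{n\<in>{2..K}. k < n}. E n * (bb g k * c n k))"
      by (rule sum.swap_restrict) auto
    also have "\<dots> = (\<Sum>k\<in>{2..<K}. \<Sum>n\<in>{k<..K}. E n * (bb g k * c n k))"
      by (rule sum.cong) (auto intro!: sum.cong)
    finally show ?thesis .
  qed
  have X1: "(\<Sum>n\<in>{2..K}. E n * u n) = (\<Sum>n\<in>{2..K}. E n) + (\<Sum>n\<in>{2..K}. \<Sum>k\<in>{2..<n}. E n * (bb g k * c n k))"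
    by (simp add: u_def distrib_left sum_distrib_left sum.distrib)
  have X2: "(\<Sum>k\<in>{2..<K}. \<Sum>n\<in>{k<..K}. E n * (bb g k * c n k)) = (\<Sum>k\<in>{2..<K}. E k * u k)"
  proof (rule sum.cong)
    fix k assume k: "k \<in> {2..<K}"
    have "(\<Sum>n\<in>{k<..K}. E n * (bb g k * c n k)) = u k * (a k * (\<Sum>n\<in>{k<..K}. c n k * E n))"
      by (simp add: bbau sum_distrib_left algebra_simps)
    also have "\<dots> = E k * u k" using En[OF k] by simp
    finally show "(\<Sum>n\<in>{k<..K}. E n * (bb g k * c n k)) = E k * u k" .
  qed simp
  have "(\<Sum>n\<in>{2..K}. E n * u n) = (\<Sum>n\<in>{2..K}. E n) + (\<Sum>k\<in>{2..<K}. E k * u k)"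
    using X1 X2 sw by simp
  moreover have "(\<Sum>n\<in>{2..K}. E n * u n) = (\<Sum>k\<in>{2..<K}. E k * u k) + E K * u K"
  proof -
    have "{2..K} = insert K {2..<K}" using K by auto
    then show ?thesis by simp
  qed
  ultimately have "(\<Sum>n\<in>{2..K}. E n) = E K * u K" by simp
  also have "\<dots> = bb g K / real K" using K by (simp add: EK bbau a_def)
  finally show ?thesis using S1 g_def by simp
qed

lemma bb_bound:
  assumes p: "0 < p" "p < 1"
    and hyp: "\<forall>m\<in>{2..K}. (\<forall>j\<in>{1..m}. 0 < g m j) \<and> (\<forall>j\<in>{1..<m}. g m (Suc j) \<le> p * g m j)
                 \<and> (\<Sum>j\<in>{1..m}. g m j) = 1"
  shows "m \<in> {2..K} \<Longrightarrow> 0 < bb g m \<and> bb g m \<le> BB p m"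
proof (induction m rule: less_induct)
  case (less m)
  have pos: "\<forall>j\<in>{1..m}. 0 < g m j" and rat: "\<forall>j\<in>{1..<m}. g m (Suc j) \<le> p * g m j"
    and s1: "(\<Sum>j\<in>{1..m}. g m j) = 1" using hyp less.prems by auto
  have m2: "2 \<le> m" using less.prems by auto
  have le: "g m m \<le> g m j" if j: "j \<in> {1..m}" for j
  proof -
    have "g m m \<le> p^(m-j) * g m j" using chain[of p m "g m" j] p rat j by auto
    also have "\<dots> \<le> 1 * g m j" using pos j p by (intro mult_right_mono power_le_one) (auto intro: less_imp_le)
    finally show ?thesis by simp
  qed
  have lt: "g m m < g m 1"
  proof -
    have "g m m \<le> p^(m-1) * g m 1" using chain[of p m "g m" 1] p rat m2 by auto
    also have "\<dots> < 1 * g m 1" using pos m2 p by (intro mult_strict_right_mono) (auto simp: power_less_one_iff)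
    finally show ?thesis by simp
  qed
  have "(\<Sum>j\<in>{1..m}. g m m) < (\<Sum>j\<in>{1..m}. g m j)"
    by (rule sum_strict_mono_ex1) (use le lt m2 in auto)
  hence den: "0 < 1 - real m * g m m" using s1 by simp
  have cnn: "0 \<le> g m k - g m (Suc k)" if "k \<in> {2..<m}" for k
  proof -
    have "g m (Suc k) \<le> p * g m k" using rat that by auto
    also have "\<dots> \<le> g m k" using pos that p by (intro mult_left_le_one_le) (auto intro: less_imp_le)
    finally show ?thesis by simp
  qed
  have IH: "0 < bb g k \<and> bb g k \<le> BB p k" if "k \<in> {2..<m}" for k
    using less.IH[of k] that less.prems by auto
  have A0: "0 \<le> (\<Sum>k\<in>{2..<m}. bb g k * (g m k - g m (Suc k)))"
    by (rule sum_nonneg) (metis IH cnn less_imp_le mult_nonneg_nonneg)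
  have A1: "(\<Sum>k\<in>{2..<m}. bb g k * (g m k - g m (Suc k))) \<le> (\<Sum>k\<in>{2..<m}. BB p k * (g m k - g m (Suc k)))"
    by (rule sum_mono) (use IH cnn in \<open>auto intro!: mult_right_mono\<close>)
  have Q: "1 + (\<Sum>k\<in>{2..<m}. BB p k * (g m k - g m (Suc k))) + BB p m * g m m \<le> cc p m"
    using Qlem[OF p m2, of "g m"] pos rat s1 by (auto intro: less_imp_le)
  have bbm: "bb g m = real m * (1 + (\<Sum>k\<in>{2..<m}. bb g k * (g m k - g m (Suc k)))) / (1 - real m * g m m)"
    by (subst bb.simps) simp
  have "0 < bb g m" unfolding bbm using den A0 m2 by (intro divide_pos_pos) auto
  moreover have "bb g m \<le> BB p m"
  proof -
    have "real m * (1 + (\<Sum>k\<in>{2..<m}. bb g k * (g m k - g m (Suc k))))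
        \<le> real m * (cc p m - BB p m * g m m)"
      using A1 Q by (intro mult_left_mono) auto
    also have "\<dots> = BB p m * (1 - real m * g m m)" by (simp add: BB_def algebra_simps)
    finally show ?thesis unfolding bbm using den by (simp add: pos_divide_le_eq)
  qed
  ultimately show ?case by simp
qed

lemma rank_sum: "finite (S::nat set) \<Longrightarrow> (\<Sum>i\<in>S. (p::real) ^ card {j\<in>S. j < i}) = (\<Sum>k<card S. p^k)"
proof (induction S rule: finite_linorder_max_induct)
  case empty then show ?case by simp
next
  case (insert b A)
  have nb: "b \<notin> A" using insert by auto
  have c1: "{j \<in> insert b A. j < i} = {j\<in>A. j < i}" if "i \<in> A" for i
    using insert that by auto
  have c2: "{j \<in> insert b A. j < b} = A" using insert by auto
  have "(\<Sum>i\<in>insert b A. p ^ card {j \<in> insert b A. j < i}) = p ^ card A + (\<Sum>i\<in>A. p ^ card {j \<in> insert b A. j < i})"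
    using nb insert c2 by simp
  also have "(\<Sum>i\<in>A. p ^ card {j \<in> insert b A. j < i}) = (\<Sum>i\<in>A. p ^ card {j \<in> A. j < i})"
    by (intro sum.cong refl arg_cong[where f="\<lambda>S. p ^ card S"] c1)
  finally show ?case using insert nb by simp
qed

lemma OA_Mp:
  assumes p: "0 < p" "p < 1"
  shows "in_Mp p K (f_OA p id) \<and> separable_wrt p K (f_OA p id) id"
proof -
  have cpos: "0 < (1 - p) / (1 - p ^ card S)" if "S \<in> choice_sets K" for S
  proof -
    have "card S \<ge> 2" using that by (simp add: choice_sets_def)
    then have "p ^ card S < 1" using p by (simp add: power_less_one_iff)
    then show ?thesis using p by simp
  qed
  have A: "\<forall>S\<in>choice_sets K. \<forall>i\<in>{1..K}. (0 < f_OA p id i S \<longleftrightarrow> i \<in> S)"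
  proof (intro ballI)
    fix S i assume S: "S \<in> choice_sets K" and "i \<in> {1..K}"
    show "(0 < f_OA p id i S \<longleftrightarrow> i \<in> S)"
    proof (cases "i \<in> S")
      case True
      have "f_OA p id i S = (1 - p) / (1 - p ^ card S) * p ^ (local_rank id i S - 1)"
        using True by (simp only: f_OA_def if_True)
      moreover have "0 < (1 - p) / (1 - p ^ card S) * p ^ (local_rank id i S - 1)"
        using cpos[OF S] p by (intro mult_pos_pos) auto
      ultimately show ?thesis using True by simp
    qed (simp add: f_OA_def)
  qed
  have B: "(\<Sum>i\<in>S. f_OA p id i S) = 1" if S: "S \<in> choice_sets K" for S
  proof -
    have fin: "finite S" using S by (auto simp: choice_sets_def intro: finite_subset)
    have c2: "card S \<ge> 2" using S by (simp add: choice_sets_def)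
    then have pc: "p ^ card S < 1" using p by (simp add: power_less_one_iff)
    have "(\<Sum>i\<in>S. f_OA p id i S) = (\<Sum>i\<in>S. (1 - p) / (1 - p ^ card S) * p ^ card {j\<in>S. j < i})"
      by (rule sum.cong) (auto simp: f_OA_def local_rank_def)
    also have "\<dots> = (1 - p) / (1 - p ^ card S) * (\<Sum>k<card S. p^k)"
      by (simp only: sum_distrib_left[symmetric] rank_sum[OF fin])
    also have "\<dots> = 1" using p pc by (simp add: sum_gp_strict)
    finally show ?thesis .
  qed
  have Sep: "separable_wrt p K (f_OA p id) id"
    unfolding separable_wrt_def
  proof (intro ballI impI)
    fix S i i' assume S: "S \<in> choice_sets K" and i: "i \<in> S" and i': "i' \<in> S" and lt: "id i' < id i"
    have fin: "finite S" using S by (auto simp: choice_sets_def intro: finite_subset)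
    have "{j\<in>S. j < i'} \<subset> {j\<in>S. j < i}" using lt i' by auto
    hence "card {j\<in>S. j < i'} < card {j\<in>S. j < i}" using fin by (intro psubset_card_mono) auto
    hence "p ^ card {j\<in>S. j < i} \<le> p ^ Suc (card {j\<in>S. j < i'})" using p
      by (intro power_decreasing) auto
    hence "(1 - p) / (1 - p ^ card S) * p ^ card {j\<in>S. j < i} \<le> (1 - p) / (1 - p ^ card S) * (p * p ^ card {j\<in>S. j < i'})"
      using cpos[OF S] by (intro mult_left_mono) auto
    then show "f_OA p id i S \<le> p * f_OA p id i' S"
      using i i' by (simp add: f_OA_def local_rank_def algebra_simps)
  qed
  have "bij_betw id {1..K} {1..K}" by simp
  then show ?thesis using A B Sep unfolding in_Mp_def by blast
qed

lemma OA_val: assumes "j \<in> {1..m}" shows "f_OA p id j {1..m} = (1-p)/(1-p^m) * p^(j-1)"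
proof -
  have "{x\<in>{1..m}. id x < id j} = {1..<j}" using assms by auto
  then show ?thesis using assms by (simp add: f_OA_def local_rank_def)
qed

lemma bb_OA:
  assumes p: "0 < p" "p < 1"
  shows "2 \<le> m \<Longrightarrow> bb (\<lambda>m j. f_OA p id j {1..m}) m = BB p m"
proof (induction m rule: less_induct)
  case (less m)
  define oa where "oa = (\<lambda>m j. f_OA p id j {1..m})"
  define W where "W = WW p m"
  have pm: "p^m < 1" using p less.prems by (simp add: power_less_one_iff)
  have W: "W = (1 - p^m) / (1 - p)" using p by (simp add: W_def WW_def sum_gp_strict)
  have Wpos: "0 < W" using W pm p by simp
  have kap: "(1-p)/(1-p^m) = 1 / W" using W by simp
  have ok: "oa m k - oa m (Suc k) = (1 - p) * p^(k-1) / W" if "k \<in> {2..<m}" for k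
  proof -
    have "p^k = p * p^(k-1)" using that by (cases k) auto
    moreover have "oa m k = (1-p)/(1-p^m) * p^(k-1)" "oa m (Suc k) = (1-p)/(1-p^m) * p^(Suc k - 1)"
      unfolding oa_def using that by (intro OA_val; auto)+
    ultimately show ?thesis unfolding kap using Wpos by (simp add: field_simps)
  qed
  have om: "oa m m = p^(m-1) / W"
  proof -
    have "oa m m = (1-p)/(1-p^m) * p^(m-1)" unfolding oa_def using less.prems by (intro OA_val) auto
    then show ?thesis unfolding kap by simp
  qed
  have sum: "(\<Sum>k\<in>{2..<m}. bb oa k * (oa m k - oa m (Suc k))) = (1-p) * (\<Sum>k\<in>{2..<m}. BB p k * p^(k-1)) / W"
  proof -
    have "(\<Sum>k\<in>{2..<m}. bb oa k * (oa m k - oa m (Suc k))) = (\<Sum>k\<in>{2..<m}. ((1-p)/W) * (BB p k * p^(k-1)))"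
    proof (rule sum.cong)
      fix k assume k: "k \<in> {2..<m}"
      have "bb oa k = BB p k" unfolding oa_def using k by (intro less.IH) auto
      then show "bb oa k * (oa m k - oa m (Suc k)) = ((1-p)/W) * (BB p k * p^(k-1))"
        using ok[OF k] by simp
    qed simp
    then show ?thesis by (simp only: sum_distrib_left[symmetric]) simp
  qed
  note Yi = Y[OF p less.prems]
  have WQ': "W - real m * p^(m-1) = (1-p) * QQ p (m-1)"
  proof -
    have "m = Suc (m-1)" using less.prems by simp
    then have "W = WW p (m-1) + p^(m-1)" unfolding W_def by (metis WW_Suc)
    then show ?thesis using WQ[of p "m-1"] less.prems by (simp add: algebra_simps of_nat_diff)
  qed
  have dpos: "0 < W - real m * p^(m-1)" unfolding WQ' using p QQ_pos[OF p(1), of "m-1"] less.prems by simp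
  have num: "1 + (\<Sum>k\<in>{2..<m}. bb oa k * (oa m k - oa m (Suc k))) = cc p m * (W - real m * p^(m-1)) / W"
    unfolding sum using Yi Wpos unfolding W_def[symmetric]
    by (simp add: field_simps BB_def)
  have den: "1 - real m * oa m m = (W - real m * p^(m-1)) / W" unfolding om using Wpos by (simp add: field_simps)
  have "bb oa m = real m * (1 + (\<Sum>k\<in>{2..<m}. bb oa k * (oa m k - oa m (Suc k)))) / (1 - real m * oa m m)"
    by (subst bb.simps) simp
  also have "\<dots> = real m * cc p m" unfolding num den using Wpos dpos by (simp add: field_simps)
  finally show ?case unfolding oa_def BB_def id_def by simp
qed

lemma QQ_closed: assumes "p < 1" shows "(1-p)^2 * QQ p n = real n * p^(n+1) - real (n+1) * p^n + 1"
proof -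
  have w: "(1-p) * WW p n = 1 - p^n" using assms by (simp add: WW_def sum_gp_strict)
  have "(1-p)^2 * QQ p n = (1-p) * ((1-p) * QQ p n)" by (simp add: power2_eq_square)
  also have "\<dots> = (1-p) * (WW p n - real n * p^n)" by (simp only: WQ)
  also have "\<dots> = (1-p) * WW p n - (1-p) * (real n * p^n)" by (simp add: algebra_simps)
  also have "\<dots> = real n * p^(n+1) - real (n+1) * p^n + 1" unfolding w by (simp add: algebra_simps)
  finally show ?thesis .
qed

lemma C_cc: assumes p: "0 < p" "p < 1" and K: "2 \<le> K" shows "C_const K p = cc p K"
proof -
  have split: "{2..K} = insert 2 {3..K}" using K by auto
  have q1: "QQ p 1 = 1" by (simp add: QQ_def)
  have cK: "cc p K = (1+p)/(1-p) + (\<Sum>j\<in>{3..K}. p^(j-1) / QQ p (j-1) / (1-p))"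
    unfolding cc_def split using q1 by (simp add: add_divide_distrib sum_divide_distrib)
  have "(\<Sum>r\<in>{1..K-2}. (1 - p) * p ^ (K - r) /
        (real (K - r) * p ^ (K - r + 1) - real (K - r + 1) * p ^ (K - r) + 1))
      = (\<Sum>j\<in>{3..K}. p^(j-1) / QQ p (j-1) / (1-p))"
  proof (rule sum.reindex_bij_witness[where i="\<lambda>j. K - j + 1" and j="\<lambda>r. K - r + 1"])
    fix r assume r: "r \<in> {1..K-2}"
    define n where "n = K - r"
    have n: "K - r + 1 - 1 = n" "2 \<le> n" using r K by (auto simp: n_def)
    have Qp: "0 < QQ p n" using QQ_pos[OF p(1)] n by simp
    have "(1 - p) * p ^ n / (real n * p ^ (n + 1) - real (n + 1) * p ^ n + 1) = p^n / QQ p n / (1-p)"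
    proof -
      have "(1 - p) * p ^ n / ((1-p)^2 * QQ p n) = (1 - p) * p ^ n / ((1-p) * ((1-p) * QQ p n))"
        by (simp add: power2_eq_square mult.assoc)
      also have "\<dots> = p ^ n / ((1-p) * QQ p n)" using p by (intro mult_divide_mult_cancel_left) auto
      also have "\<dots> = p^n / QQ p n / (1-p)" by (simp add: mult.commute)
      finally show ?thesis unfolding QQ_closed[OF p(2)] .
    qed
    then show "p ^ (K - r + 1 - 1) / QQ p (K - r + 1 - 1) / (1 - p) =
      (1 - p) * p ^ (K - r) / (real (K - r) * p ^ (K - r + 1) - real (K - r + 1) * p ^ (K - r) + 1)"
      unfolding n(1) n_def by simp
  qed (use K in auto)
  then show ?thesis unfolding C_const_def cK by simp
qed

theorem mainTheorem5:
  fixes K :: nat and p :: real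
  assumes "2 \<le> K" and "0 < p" and "p < 1"
  shows "(\<forall>f. in_Mp p K f \<and> separable_wrt p K f id \<longrightarrow>
            (\<Sum>r\<in>{1..K-1}. D K f r) \<le> C_const K p)
    \<and> (\<Sum>r\<in>{1..K-1}. D K (f_OA p id) r) = C_const K p
    \<and> in_Mp p K (f_OA p id) \<and> separable_wrt p K (f_OA p id) id
    \<and> (\<forall>f. in_Mp p K f \<and> separable_wrt p K f id \<longrightarrow> I_N p K (f_OA p id) \<le> I_N p K f)
    \<and> I_N p K (f_OA p id) = ln (1 / p) / C_const K p
    \<and> ln (1 / p) / C_const K p =
        (1 - p) * ln (1 / p) /
        (1 + (\<Sum>j\<in>{2..K}. p ^ (j - 1) / (\<Sum>m\<in>{1..j-1}. real m * p ^ (m - 1))))"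
proof -
  note K = assms(1) and p = assms(2,3)
  have CC: "C_const K p = cc p K" by (rule C_cc[OF p K])
  have gen: "0 < (\<Sum>r\<in>{1..K-1}. D K f r) \<and> (\<Sum>r\<in>{1..K-1}. D K f r) \<le> C_const K p"
    if f: "in_Mp p K f" "separable_wrt p K f id" for f
  proof -
    have hyp: "\<forall>m\<in>{2..K}. (\<forall>j\<in>{1..m}. 0 < f j {1..m}) \<and> (\<forall>j\<in>{1..<m}. f (Suc j) {1..m} \<le> p * f j {1..m})
                 \<and> (\<Sum>j\<in>{1..m}. f j {1..m}) = 1"
    proof
      fix m assume m: "m \<in> {2..K}"
      have S: "{1..m} \<in> choice_sets K" using m by (auto simp: choice_sets_def)
      have a: "\<forall>j\<in>{1..m}. 0 < f j {1..m}" using f(1) S m unfolding in_Mp_def by auto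
      have b: "\<forall>j\<in>{1..<m}. f (Suc j) {1..m} \<le> p * f j {1..m}"
        using f(2) S unfolding separable_wrt_def by auto
      have c: "(\<Sum>j\<in>{1..m}. f j {1..m}) = 1" using f(1) S unfolding in_Mp_def by auto
      show "(\<forall>j\<in>{1..m}. 0 < f j {1..m}) \<and> (\<forall>j\<in>{1..<m}. f (Suc j) {1..m} \<le> p * f j {1..m})
                 \<and> (\<Sum>j\<in>{1..m}. f j {1..m}) = 1" using a b c by blast
    qed
    have "0 < bb (\<lambda>m j. f j {1..m}) K \<and> bb (\<lambda>m j. f j {1..m}) K \<le> BB p K"
      using bb_bound[OF p, of K "\<lambda>m j. f j {1..m}" K] hyp K by auto
    then show ?thesis unfolding D_bb[OF K] CC BB_def using K
      by (simp add: divide_le_eq mult.commute)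
  qed
  have OA: "(\<Sum>r\<in>{1..K-1}. D K (f_OA p id) r) = C_const K p"
    unfolding D_bb[OF K] bb_OA[OF p K] CC BB_def using K by simp
  note Mp = OA_Mp[OF p, of K]
  have lnp: "0 < ln (1/p)" using p by simp
  have IOA: "I_N p K (f_OA p id) = ln (1 / p) / C_const K p" unfolding I_N_def OA ..
  have min: "I_N p K (f_OA p id) \<le> I_N p K f" if "in_Mp p K f \<and> separable_wrt p K f id" for f
  proof -
    have "ln (1 / p) / C_const K p \<le> ln (1 / p) / (\<Sum>r\<in>{1..K-1}. D K f r)"
      using gen[of f] that lnp by (intro divide_left_mono) (auto intro: mult_pos_pos)
    then show ?thesis unfolding IOA by (simp only: I_N_def)
  qed
  have last: "ln (1 / p) / C_const K p =
        (1 - p) * ln (1 / p) /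
        (1 + (\<Sum>j\<in>{2..K}. p ^ (j - 1) / (\<Sum>m\<in>{1..j-1}. real m * p ^ (m - 1))))"
    unfolding CC cc_def QQ_def by (simp add: mult.commute)
  show ?thesis using gen OA Mp min IOA last by blast
qed

end
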